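(* Let $X$ be a reflexive complex Banach space and let $A,B$ be positive self-adjoint operators from $X$ to $X^\ast$ with positive lower bound, such that $\operatorname{dom}J_A^\ast\cap\operatorname{dom}J_B^\ast$ is dense in $X$. Let $J$ be the densely defined operator from $H_A\oplus H_B$ to $X^\ast$ with $\operatorname{dom}J=\{Ax\oplus By: x\in\operatorname{dom}A,\ y\in\operatorname{dom}B\}$ and $J(Ax\oplus By)=Ax+By$. Then $J^{\ast\ast}J^\ast=A\dotplus B$ (the form sum), and $A\dotplus B$ is an extension of $A+B$ (defined on $\operatorname{dom}A\cap\operatorname{dom}B$).
   Context: $X^\ast$ denotes the conjugate dual of $X$ (continuous conjugate-linear functionals on $X$); $X$ is identified with $X^{\ast\ast}$. For $v\in X^\ast$, $x\in X$ write $(v,x):=v(x)$ and $(x,v):=\overline{v(x)}$. An operator $A$ from $X$ to $X^\ast$ is positive if $(Ax,x)\ge0$ for all $x\in\operatorname{dom}A$, has positive lower bound if $(Ax,x)\ge\gamma\|x\|^2$ for some $\gamma>0$ and all $x\in\operatorname{dom}A$; its adjoint $A^\ast$ has domain $\{y\in X:x\mapsto(Ax,y)\text{ continuous on }\operatorname{dom}A\}$ and is determined by $(x,A^\ast y)=(Ax,y)$; $A$ is self-adjoint if $A=A^\ast$. For a positive self-adjoint $A$: $H_A$ is the completion of $\operatorname{ran}A$ with respect to the inner product $[Ax,Ay]_A:=(Ax,y)$; $J_A$ is the operator from $H_A$ to $X^\ast$ with $\operatorname{dom}J_A=\operatorname{ran}A$, $J_A(Ax)=Ax$. Adjoints of operators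 between a Hilbert space $K$ (inner product $[\cdot,\cdot]$) and $X^\ast$: for densely defined $T$ from $K$ to $X^\ast$, $T^\ast$ is the operator from $X$ to $K$ with $\operatorname{dom}T^\ast=\{y\in X:h\mapsto(Th,y)\text{ continuous on }\operatorname{dom}T\}$ and $[h,T^\ast y]=(Th,y)$; for densely defined $S$ from $X$ to $K$, $S^\ast$ is the operator from $K$ to $X^\ast$ with $\operatorname{dom}S^\ast=\{h\in K: y\mapsto[Sy,h]\text{ continuous on }\operatorname{dom}S\}$ and $(S^\ast h,y)=[h,Sy]$ for $y\in\operatorname{dom}S$. $J^{\ast\ast}=(J^\ast)^\ast$. Form sum: $H_{A,B}:=\operatorname{dom}J_A^\ast\cap\operatorname{dom}J_B^\ast$ equipped with the inner product $t(x,y)=[J_A^\ast x,J_A^\ast y]_A+[J_B^\ast x,J_B^\ast y]_B$ is a Hilbert space, dense in $X$, with $t(x,x)\ge\gamma\|x\|^2$. $A\dotplus B$ is the operator with domain $\{x\in H_{A,B}: y\mapsto t(x,y)\text{ continuous on }H_{A,B}\text{ in the norm of }X\}$ and $(A\dotplus B)x$ the element $z\in X^\ast$ with $(z,y)=t(x,y)$ for all $y\in H_{A,B}$. *)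

theory Defs
  imports "HOL-Analysis.Analysis" "HOL-Library.Complex_Order"
begin

class complex_vec = real_vector +
  fixes scaleC :: "complex \<Rightarrow> 'a \<Rightarrow> 'a"  (infixr \<open>*\<^sub>C\<close> 75)
  assumes scaleC_add_right: "a *\<^sub>C (x + y) = a *\<^sub>C x + a *\<^sub>C y"
    and scaleC_add_left: "(a + b) *\<^sub>C x = a *\<^sub>C x + b *\<^sub>C x"
    and scaleC_scaleC: "a *\<^sub>C (b *\<^sub>C x) = (a * b) *\<^sub>C x"
    and scaleC_one: "1 *\<^sub>C x = x"
    and scaleR_scaleC: "r *\<^sub>R x = complex_of_real r *\<^sub>C x"

class complex_normed_vec = complex_vec + real_normed_vector +
  assumes norm_scaleC: "norm (a *\<^sub>C x) = cmod a * norm x"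

text \<open>Elements of the conjugate dual X* are represented as functions X => complex.
  For v in X* and x in X: (v,x) = v x and (x,v) = cnj (v x).\<close>

definition cdual :: "('x::complex_normed_vec \<Rightarrow> complex) set" where
  "cdual = {v. (\<forall>x y. v (x + y) = v x + v y) \<and> (\<forall>c x. v (c *\<^sub>C x) = cnj c * v x)
               \<and> continuous_on UNIV v}"

definition dnorm :: "('x::complex_normed_vec \<Rightarrow> complex) \<Rightarrow> real" where
  "dnorm v = (SUP x\<in>{x. norm x \<le> 1}. cmod (v x))"

text \<open>Reflexive: every continuous conjugate-linear functional on X* is of the form
  v |-> (x,v) = cnj (v x) for some x in X.\<close>
definition reflexive_sp :: "'x::complex_normed_vec itself \<Rightarrow> bool" where
  "reflexive_sp _ \<longleftrightarrow>
     (\<forall>\<phi> :: ('x \<Rightarrow> complex) \<Rightarrow> complex.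
        ((\<forall>v\<in>cdual. \<forall>w\<in>cdual. \<phi> (\<lambda>x. v x + w x) = \<phi> v + \<phi> w)
         \<and> (\<forall>c. \<forall>v\<in>cdual. \<phi> (\<lambda>x. c * v x) = cnj c * \<phi> v)
         \<and> (\<forall>v\<in>cdual. \<forall>e>0. \<exists>d>0. \<forall>w\<in>cdual. dnorm (\<lambda>x. w x - v x) < d \<longrightarrow> cmod (\<phi> w - \<phi> v) < e))
        \<longrightarrow> (\<exists>x. \<forall>v\<in>cdual. \<phi> v = cnj (v x)))"

definition aval :: "('a \<times> 'b) set \<Rightarrow> 'a \<Rightarrow> 'b" where
  "aval G x = (THE v. (x, v) \<in> G)"

text \<open>Linear operator from X to X* (graph: single-valued linear subspace of X x X*).\<close>
definition op_XXs :: "('x::complex_normed_vec \<times> ('x \<Rightarrow> complex)) set \<Rightarrow> bool" where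
  "op_XXs G \<longleftrightarrow> G \<subseteq> UNIV \<times> cdual
     \<and> (\<forall>x u w. (x, u) \<in> G \<longrightarrow> (x, w) \<in> G \<longrightarrow> u = w)
     \<and> (0, \<lambda>_. 0) \<in> G
     \<and> (\<forall>x u y w. (x, u) \<in> G \<longrightarrow> (y, w) \<in> G \<longrightarrow> (x + y, \<lambda>z. u z + w z) \<in> G)
     \<and> (\<forall>c x u. (x, u) \<in> G \<longrightarrow> (c *\<^sub>C x, \<lambda>z. c * u z) \<in> G)"

definition positive_op :: "('x::complex_normed_vec \<times> ('x \<Rightarrow> complex)) set \<Rightarrow> bool" where
  "positive_op G \<longleftrightarrow> (\<forall>(x, v)\<in>G. 0 \<le> v x)"

definition pos_lower_bound :: "('x::complex_normed_vec \<times> ('x \<Rightarrow> complex)) set \<Rightarrow> bool" where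
  "pos_lower_bound G \<longleftrightarrow> (\<exists>\<gamma>>0. \<forall>(x, v)\<in>G. complex_of_real (\<gamma> * (norm x)\<^sup>2) \<le> v x)"

definition cont_on_d :: "('k \<Rightarrow> 'k \<Rightarrow> real) \<Rightarrow> 'k set \<Rightarrow> ('k \<Rightarrow> complex) \<Rightarrow> bool" where
  "cont_on_d d D f \<longleftrightarrow>
     (\<forall>h\<in>D. \<forall>e>0. \<exists>\<delta>>0. \<forall>k\<in>D. d k h < \<delta> \<longrightarrow> cmod (f k - f h) < e)"

definition adjXX :: "('x::complex_normed_vec \<times> ('x \<Rightarrow> complex)) set \<Rightarrow> ('x \<times> ('x \<Rightarrow> complex)) set" where
  "adjXX G = {(y, z). cont_on_d dist (Domain G) (\<lambda>x. aval G x y) \<and> z \<in> cdual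
                     \<and> (\<forall>(x, v)\<in>G. cnj (z x) = v y)}"

definition self_adjoint_op :: "('x::complex_normed_vec \<times> ('x \<Rightarrow> complex)) set \<Rightarrow> bool" where
  "self_adjoint_op G \<longleftrightarrow> G = adjXX G"

definition is_hilbert_ip :: "('h::{complex_normed_vec, banach} \<Rightarrow> 'h \<Rightarrow> complex) \<Rightarrow> bool" where
  "is_hilbert_ip ip \<longleftrightarrow>
     (\<forall>x y z. ip (x + y) z = ip x z + ip y z)
   \<and> (\<forall>c x y. ip (c *\<^sub>C x) y = c * ip x y)
   \<and> (\<forall>x y. ip y x = cnj (ip x y))
   \<and> (\<forall>x. ip x x = complex_of_real ((norm x)\<^sup>2))"

definition ip_dist :: "('k::minus \<Rightarrow> 'k \<Rightarrow> complex) \<Rightarrow> 'k \<Rightarrow> 'k \<Rightarrow> real" where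
  "ip_dist ip h k = sqrt (Re (ip (h - k) (h - k)))"

definition adjKX :: "('k::minus \<Rightarrow> 'k \<Rightarrow> complex) \<Rightarrow> ('k \<times> ('x::complex_normed_vec \<Rightarrow> complex)) set
                     \<Rightarrow> ('x \<times> 'k) set" where
  "adjKX ip T = {(y, k). cont_on_d (ip_dist ip) (Domain T) (\<lambda>h. aval T h y)
                        \<and> (\<forall>(h, v)\<in>T. ip h k = v y)}"

definition adjXK :: "('k \<Rightarrow> 'k \<Rightarrow> complex) \<Rightarrow> ('x::complex_normed_vec \<times> 'k) set
                     \<Rightarrow> ('k \<times> ('x \<Rightarrow> complex)) set" where
  "adjXK ip S = {(h, z). cont_on_d dist (Domain S) (\<lambda>y. ip (aval S y) h) \<and> z \<in> cdual
                        \<and> (\<forall>(y, k)\<in>S. z y = ip h k)}"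

text \<open>(H, ip, iota) is a completion of ran A w.r.t. [Ax, Ay]_A = (Ax, y): iota is a linear
  isometric (inner-product preserving) embedding of ran A with dense range in the
  Hilbert space H.\<close>
definition is_completion_A ::
  "('h::{complex_normed_vec, banach} \<Rightarrow> 'h \<Rightarrow> complex) \<Rightarrow> (('x::complex_normed_vec \<Rightarrow> complex) \<Rightarrow> 'h)
   \<Rightarrow> ('x \<times> ('x \<Rightarrow> complex)) set \<Rightarrow> bool" where
  "is_completion_A ip \<iota> A \<longleftrightarrow> is_hilbert_ip ip
     \<and> (\<forall>u\<in>Range A. \<forall>w\<in>Range A. \<iota> (\<lambda>x. u x + w x) = \<iota> u + \<iota> w)
     \<and> (\<forall>c. \<forall>u\<in>Range A. \<iota> (\<lambda>x. c * u x) = c *\<^sub>C \<iota> u)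
     \<and> (\<forall>(x, u)\<in>A. \<forall>(y, w)\<in>A. ip (\<iota> u) (\<iota> w) = u y)
     \<and> closure (\<iota> ` Range A) = UNIV"

definition J_op :: "(('x::complex_normed_vec \<Rightarrow> complex) \<Rightarrow> 'h) \<Rightarrow> ('x \<times> ('x \<Rightarrow> complex)) set
                    \<Rightarrow> ('h \<times> ('x \<Rightarrow> complex)) set" where
  "J_op \<iota> A = {(\<iota> u, u) | u. u \<in> Range A}"

definition form_dom where
  "form_dom ipA \<iota>A A ipB \<iota>B B =
     Domain (adjKX ipA (J_op \<iota>A A)) \<inter> Domain (adjKX ipB (J_op \<iota>B B))"

definition form_t where
  "form_t ipA \<iota>A A ipB \<iota>B B x y =
     ipA (aval (adjKX ipA (J_op \<iota>A A)) x) (aval (adjKX ipA (J_op \<iota>A A)) y)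
   + ipB (aval (adjKX ipB (J_op \<iota>B B)) x) (aval (adjKX ipB (J_op \<iota>B B)) y)"

definition form_sum ::
  "('ha::{complex_normed_vec, banach} \<Rightarrow> 'ha \<Rightarrow> complex) \<Rightarrow> (('x::complex_normed_vec \<Rightarrow> complex) \<Rightarrow> 'ha)
   \<Rightarrow> ('x \<times> ('x \<Rightarrow> complex)) set
   \<Rightarrow> ('hb::{complex_normed_vec, banach} \<Rightarrow> 'hb \<Rightarrow> complex) \<Rightarrow> (('x \<Rightarrow> complex) \<Rightarrow> 'hb)
   \<Rightarrow> ('x \<times> ('x \<Rightarrow> complex)) set \<Rightarrow> ('x \<times> ('x \<Rightarrow> complex)) set" where
  "form_sum ipA \<iota>A A ipB \<iota>B B =
     {(x, z). x \<in> form_dom ipA \<iota>A A ipB \<iota>B B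
        \<and> cont_on_d dist (form_dom ipA \<iota>A A ipB \<iota>B B) (\<lambda>y. form_t ipA \<iota>A A ipB \<iota>B B x y)
        \<and> z \<in> cdual
        \<and> (\<forall>y\<in>form_dom ipA \<iota>A A ipB \<iota>B B. z y = form_t ipA \<iota>A A ipB \<iota>B B x y)}"

definition ip_sum :: "('ha \<Rightarrow> 'ha \<Rightarrow> complex) \<Rightarrow> ('hb \<Rightarrow> 'hb \<Rightarrow> complex)
                      \<Rightarrow> 'ha \<times> 'hb \<Rightarrow> 'ha \<times> 'hb \<Rightarrow> complex" where
  "ip_sum ipA ipB p q = ipA (fst p) (fst q) + ipB (snd p) (snd q)"

definition J_sum :: "(('x::complex_normed_vec \<Rightarrow> complex) \<Rightarrow> 'ha) \<Rightarrow> ('x \<times> ('x \<Rightarrow> complex)) set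
                     \<Rightarrow> (('x \<Rightarrow> complex) \<Rightarrow> 'hb) \<Rightarrow> ('x \<times> ('x \<Rightarrow> complex)) set
                     \<Rightarrow> (('ha \<times> 'hb) \<times> ('x \<Rightarrow> complex)) set" where
  "J_sum \<iota>A A \<iota>B B = {((\<iota>A u, \<iota>B w), \<lambda>x. u x + w x) | u w. u \<in> Range A \<and> w \<in> Range B}"

definition op_sum :: "('x \<times> ('x \<Rightarrow> complex)) set \<Rightarrow> ('x \<times> ('x \<Rightarrow> complex)) set
                      \<Rightarrow> ('x \<times> ('x \<Rightarrow> complex)) set" where
  "op_sum A B = {(x, \<lambda>y. u y + w y) | x u w. (x, u) \<in> A \<and> (x, w) \<in> B}"

end

theory Submission
  imports Defs
begin

lemma hip_all: assumes "is_hilbert_ip ip"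
  shows "(\<forall>x y z. ip (x + y) z = ip x z + ip y z)
   \<and> (\<forall>c x y. ip (c *\<^sub>C x) y = c * ip x y)
   \<and> (\<forall>x y. ip y x = cnj (ip x y))
   \<and> (\<forall>x. ip x x = complex_of_real ((norm x)\<^sup>2))"
  using assms unfolding is_hilbert_ip_def .
lemma hip_add_left: assumes H: "is_hilbert_ip ip" shows "ip (x + y) z = ip x z + ip y z"
  using hip_all[OF H] by blast
lemma hip_scale_left: assumes H: "is_hilbert_ip ip" shows "ip (c *\<^sub>C x) y = c * ip x y"
  using hip_all[OF H] by blast
lemma hip_sym: assumes H: "is_hilbert_ip ip" shows "ip y x = cnj (ip x y)"
  using hip_all[OF H] by blast
lemma hip_self: assumes H: "is_hilbert_ip ip" shows "ip x x = complex_of_real ((norm x)\<^sup>2)"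
  using hip_all[OF H] by blast
lemma hip_add_right: assumes H: "is_hilbert_ip ip" shows "ip z (x + y) = ip z x + ip z y"
proof -
  have "ip z (x + y) = cnj (ip (x + y) z)" by (rule hip_sym[OF H])
  also have "\<dots> = cnj (ip x z) + cnj (ip y z)" by (simp add: hip_add_left[OF H])
  also have "\<dots> = ip z x + ip z y" by (simp add: hip_sym[OF H, of z x] hip_sym[OF H, of z y])
  finally show ?thesis .
qed
lemma hip_scale_right: assumes H: "is_hilbert_ip ip" shows "ip x (c *\<^sub>C y) = cnj c * ip x y"
proof -
  have "ip x (c *\<^sub>C y) = cnj (ip (c *\<^sub>C y) x)" by (rule hip_sym[OF H])
  also have "\<dots> = cnj c * cnj (ip y x)" by (simp add: hip_scale_left[OF H])
  also have "\<dots> = cnj c * ip x y" by (simp add: hip_sym[OF H, of x y])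
  finally show ?thesis .
qed
lemma hip_zero_left: assumes H: "is_hilbert_ip ip" shows "ip 0 y = 0"
proof -
  have "ip (0 + 0) y = ip 0 y + ip 0 y" by (rule hip_add_left[OF H])
  hence "ip 0 y = ip 0 y + ip 0 y" by simp
  thus ?thesis by simp
qed
lemma hip_zero_right: assumes H: "is_hilbert_ip ip" shows "ip y 0 = 0"
  using hip_sym[OF H, of y 0] hip_zero_left[OF H, of y] by simp
lemma hip_minus_left: assumes H: "is_hilbert_ip ip" shows "ip (- x) y = - ip x y"
proof -
  have "ip (x + - x) y = ip x y + ip (- x) y" by (rule hip_add_left[OF H])
  hence "0 = ip x y + ip (- x) y" by (simp add: hip_zero_left[OF H])
  thus ?thesis by (simp add: eq_neg_iff_add_eq_0 add.commute)
qed
lemma hip_diff_left: assumes H: "is_hilbert_ip ip" shows "ip (x - z) y = ip x y - ip z y"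
proof -
  have "ip (x + - z) y = ip x y + ip (- z) y" by (rule hip_add_left[OF H])
  thus ?thesis by (simp add: hip_minus_left[OF H])
qed
lemma hip_diff_right: assumes H: "is_hilbert_ip ip" shows "ip y (x - z) = ip y x - ip y z"
proof -
  have "ip y (x - z) = cnj (ip (x - z) y)" by (rule hip_sym[OF H])
  also have "\<dots> = cnj (ip x y) - cnj (ip z y)" by (simp add: hip_diff_left[OF H])
  also have "\<dots> = ip y x - ip y z" by (simp add: hip_sym[OF H, of y x] hip_sym[OF H, of y z])
  finally show ?thesis .
qed

lemma hip_CS:
  assumes H: "is_hilbert_ip ip"
  shows "cmod (ip x y) \<le> norm x * norm y"
proof (cases "y = 0")
  case True then show ?thesis using hip_zero_right[OF H] by simp
next
  case False
  define a where "a = ip x y"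
  define n where "n = (norm y)^2"
  have n: "n > 0" using False by (simp add: n_def)
  define t where "t = a / of_real n"
  have ct: "cnj t = cnj a / of_real n" unfolding t_def by simp
  have yx: "ip y x = cnj a" using hip_sym[OF H] a_def by metis
  have yy: "ip y y = of_real n" using hip_self[OF H] n_def by metis
  have xx: "ip x x = of_real ((norm x)^2)" by (rule hip_self[OF H])
  have e: "ip (x - t *\<^sub>C y) (x - t *\<^sub>C y) = (ip x x - cnj t * ip x y) - (t * ip y x - t * (cnj t * ip y y))"
    unfolding hip_diff_left[OF H] hip_diff_right[OF H] hip_scale_left[OF H] hip_scale_right[OF H]
    by (simp add: algebra_simps)
  have aa: "a * cnj a = of_real ((cmod a)^2)" using complex_norm_square[of a] by simp
  have "(ip x x - cnj t * ip x y) - (t * ip y x - t * (cnj t * ip y y))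
      = of_real ((norm x)^2) - a * cnj a / of_real n"
    unfolding yx yy xx a_def[symmetric] ct unfolding t_def using n
    by (simp add: field_simps)
  also have "\<dots> = of_real ((norm x)^2 - (cmod a)^2 / n)" unfolding aa by simp
  finally have "Re (ip (x - t *\<^sub>C y) (x - t *\<^sub>C y)) = (norm x)^2 - (cmod a)^2 / n" unfolding e by simp
  moreover have "Re (ip (x - t *\<^sub>C y) (x - t *\<^sub>C y)) \<ge> 0" by (simp add: hip_self[OF H])
  ultimately have "(cmod a)^2 / n \<le> (norm x)^2" by simp
  hence "(cmod a)^2 \<le> (norm x)^2 * n" using n by (simp add: divide_le_eq)
  hence "(cmod a)^2 \<le> (norm x * norm y)^2" by (simp add: n_def power_mult_distrib)
  thus ?thesis unfolding a_def by (rule power2_le_imp_le) simp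
qed

lemma hip_dist: "is_hilbert_ip ip \<Longrightarrow> ip_dist ip h k = norm (h - k)"
  by (simp add: ip_dist_def hip_self)

lemma hip_cont_left:
  assumes H: "is_hilbert_ip ip"
  shows "continuous_on UNIV (\<lambda>h. ip h d)"
proof -
  have "(norm d)-lipschitz_on UNIV (\<lambda>h. ip h d)"
  proof (rule lipschitz_onI)
    fix x y
    have "dist (ip x d) (ip y d) = cmod (ip (x - y) d)"
      by (simp add: dist_norm hip_diff_left[OF H])
    also have "\<dots> \<le> norm (x - y) * norm d" by (rule hip_CS[OF H])
    finally show "dist (ip x d) (ip y d) \<le> norm d * dist x y" by (simp add: dist_norm mult.commute)
  qed simp
  thus ?thesis by (rule lipschitz_on_continuous_on)
qed

lemma cont_lip:
  assumes C: "C \<ge> 0" and b: "\<And>k h. k \<in> D \<Longrightarrow> h \<in> D \<Longrightarrow> cmod (f k - f h) \<le> C * d k h"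
  shows "cont_on_d d D f"
  unfolding cont_on_d_def
proof (intro ballI allI impI)
  fix h and e :: real assume h: "h \<in> D" and e: "e > 0"
  show "\<exists>\<delta>>0. \<forall>k\<in>D. d k h < \<delta> \<longrightarrow> cmod (f k - f h) < e"
  proof (intro exI[of _ "e/(C+1)"] conjI ballI impI)
    show "e/(C+1) > 0" using e C by simp
    fix k assume k: "k \<in> D" "d k h < e/(C+1)"
    have "cmod (f k - f h) \<le> C * d k h" using b k h by blast
    also have "\<dots> \<le> C * (e/(C+1))" using mult_left_mono[OF less_imp_le[OF k(2)] C] by simp
    also have "\<dots> < e" using e C by (simp add: field_simps)
    finally show "cmod (f k - f h) < e" .
  qed
qed

lemma cont_cong:
  assumes eq: "\<And>h. h \<in> D \<Longrightarrow> f h = g h" and c: "cont_on_d d D f"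
  shows "cont_on_d d D g"
  unfolding cont_on_d_def
proof (intro ballI allI impI)
  fix h and e :: real assume h: "h \<in> D" and e: "e > 0"
  then obtain \<delta> where "\<delta> > 0" "\<forall>k\<in>D. d k h < \<delta> \<longrightarrow> cmod (f k - f h) < e"
    using c unfolding cont_on_d_def by blast
  thus "\<exists>\<delta>>0. \<forall>k\<in>D. d k h < \<delta> \<longrightarrow> cmod (g k - g h) < e" using eq h by auto
qed

lemma cont_cnj: "cont_on_d d D f \<Longrightarrow> cont_on_d d D (\<lambda>h. cnj (f h))"
  unfolding cont_on_d_def by (metis complex_cnj_diff complex_mod_cnj)

lemma cont_mono: "D' \<subseteq> D \<Longrightarrow> cont_on_d d D f \<Longrightarrow> cont_on_d d D' f"
  unfolding cont_on_d_def by (meson subsetD)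

lemma cont_UNIV: "continuous_on UNIV f \<Longrightarrow> cont_on_d dist D f"
  unfolding continuous_on_iff cont_on_d_def by (metis UNIV_I dist_norm)

lemma aval_eq:
  assumes sv: "\<And>v v'. (x, v) \<in> G \<Longrightarrow> (x, v') \<in> G \<Longrightarrow> v = v'" and m: "(x, v) \<in> G"
  shows "aval G x = v"
  unfolding aval_def using m sv by (metis the_equality)

lemma adjKX_memI:
  assumes sv: "\<And>h v v'. (h,v)\<in>T \<Longrightarrow> (h,v')\<in>T \<Longrightarrow> v = v'"
    and eq: "\<And>h v. (h,v)\<in>T \<Longrightarrow> ip h k = v y"
    and lin: "\<And>a b. ip a k - ip b k = ip (a - b) k"
    and C: "C \<ge> 0" and bnd: "\<And>h. cmod (ip h k) \<le> C * sqrt (Re (ip h h))"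
  shows "(y,k) \<in> adjKX ip T"
proof -
  have av: "aval T h y = ip h k" if hD: "h \<in> Domain T" for h
  proof -
    obtain v where v: "(h,v)\<in>T" using hD by blast
    have "aval T h = v" using sv v by (intro aval_eq) blast+
    thus ?thesis using eq v by simp
  qed
  have "cont_on_d (ip_dist ip) (Domain T) (\<lambda>h. ip h k)"
  proof (rule cont_lip[OF C])
    fix a b
    show "cmod (ip a k - ip b k) \<le> C * ip_dist ip a b"
      unfolding lin ip_dist_def by (rule bnd)
  qed
  hence "cont_on_d (ip_dist ip) (Domain T) (\<lambda>h. aval T h y)"
    by (rule cont_cong[rotated]) (simp add: av)
  thus ?thesis unfolding adjKX_def using eq by auto
qed

lemma compl_hilbert: "is_completion_A ip \<iota> A \<Longrightarrow> is_hilbert_ip ip"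
  unfolding is_completion_A_def by blast
lemma compl_ip: "is_completion_A ip \<iota> A \<Longrightarrow> (x,u)\<in>A \<Longrightarrow> (y,w)\<in>A \<Longrightarrow> ip (\<iota> u) (\<iota> w) = u y"
  unfolding is_completion_A_def by blast
lemma compl_add: "is_completion_A ip \<iota> A \<Longrightarrow> u\<in>Range A \<Longrightarrow> w\<in>Range A \<Longrightarrow> \<iota> (\<lambda>x. u x + w x) = \<iota> u + \<iota> w"
  unfolding is_completion_A_def by blast
lemma compl_scale: "is_completion_A ip \<iota> A \<Longrightarrow> u\<in>Range A \<Longrightarrow> \<iota> (\<lambda>x. c * u x) = c *\<^sub>C \<iota> u"
  unfolding is_completion_A_def by blast
lemma compl_dense: "is_completion_A ip \<iota> A \<Longrightarrow> closure (\<iota> ` Range A) = UNIV"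
  unfolding is_completion_A_def by blast

lemma op_zero: "op_XXs A \<Longrightarrow> (0, \<lambda>_. 0) \<in> A" unfolding op_XXs_def by blast
lemma op_sv: "op_XXs A \<Longrightarrow> (x,u)\<in>A \<Longrightarrow> (x,w)\<in>A \<Longrightarrow> u = w" unfolding op_XXs_def by blast
lemma op_add: "op_XXs A \<Longrightarrow> (x,u)\<in>A \<Longrightarrow> (y,w)\<in>A \<Longrightarrow> (x + y, \<lambda>z. u z + w z) \<in> A"
  unfolding op_XXs_def by blast
lemma op_scale: "op_XXs A \<Longrightarrow> (x,u)\<in>A \<Longrightarrow> (c *\<^sub>C x, \<lambda>z. c * u z) \<in> A"
  unfolding op_XXs_def by blast
lemma op_cdual: "op_XXs A \<Longrightarrow> (x,u)\<in>A \<Longrightarrow> u \<in> cdual" unfolding op_XXs_def by blast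

lemma zero_Range: "op_XXs A \<Longrightarrow> (\<lambda>_. 0) \<in> Range A"
  using op_zero by (metis Range.intros)

lemma iota_zero:
  assumes HA: "is_completion_A ip \<iota> A" and opA: "op_XXs A"
  shows "\<iota> (\<lambda>_. 0) = 0"
proof -
  have "\<iota> (\<lambda>x. (\<lambda>_. 0) x + (\<lambda>_. 0) x) = \<iota> (\<lambda>_. 0) + \<iota> (\<lambda>_. 0)"
    using compl_add[OF HA zero_Range[OF opA] zero_Range[OF opA]] .
  thus ?thesis by simp
qed

lemma scaleC_m1: "(-1::complex) *\<^sub>C v = - v"
  using scaleR_scaleC[of "-1" v] by simp

lemma iota_inj:
  assumes HA: "is_completion_A ip \<iota> A" and opA: "op_XXs A" and lbA: "pos_lower_bound A"
    and u: "u \<in> Range A" and u': "u' \<in> Range A" and eq: "\<iota> u = \<iota> u'"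
  shows "u = u'"
proof -
  have H: "is_hilbert_ip ip" by (rule compl_hilbert[OF HA])
  obtain x where x: "(x,u)\<in>A" using u by blast
  obtain x' where x': "(x',u')\<in>A" using u' by blast
  define d where "d = x + (-1) *\<^sub>C x'"
  define ud where "ud = (\<lambda>z. u z + (-1) * u' z)"
  have s: "((-1) *\<^sub>C x', \<lambda>z. (-1) * u' z) \<in> A" by (rule op_scale[OF opA x'])
  have dA: "(d, ud) \<in> A" using op_add[OF opA x s] by (simp add: d_def ud_def)
  have sR: "(\<lambda>z. (-1) * u' z) \<in> Range A" using s by (metis Range.intros)
  have "\<iota> ud = \<iota> u + \<iota> (\<lambda>z. (-1) * u' z)" unfolding ud_def by (rule compl_add[OF HA u sR])
  also have "\<iota> (\<lambda>z. (-1) * u' z) = (-1) *\<^sub>C \<iota> u'" by (rule compl_scale[OF HA u'])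
  finally have "\<iota> ud = 0" using eq by (simp add: scaleC_m1)
  hence "ud d = 0" using compl_ip[OF HA dA dA] hip_zero_left[OF H] by simp
  moreover obtain \<gamma> where g: "\<gamma> > 0" "\<forall>(x, v)\<in>A. complex_of_real (\<gamma> * (norm x)\<^sup>2) \<le> v x"
    using lbA unfolding pos_lower_bound_def by blast
  ultimately have "complex_of_real (\<gamma> * (norm d)\<^sup>2) \<le> 0" using dA by fastforce
  hence "\<gamma> * (norm d)\<^sup>2 \<le> 0" by (simp add: less_eq_complex_def)
  hence "(norm d)\<^sup>2 \<le> 0" using g(1) by (simp add: mult_le_0_iff)
  hence "d = 0" by simp
  hence "ud = (\<lambda>_. 0)" using op_sv[OF opA _ op_zero[OF opA]] dA by simp
  hence "\<forall>z. u z + (-1) * u' z = 0" unfolding ud_def by metis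
  thus ?thesis by (intro ext) (simp add: algebra_simps)
qed

lemma J_op_sv:
  assumes HA: "is_completion_A ip \<iota> A" and opA: "op_XXs A" and lbA: "pos_lower_bound A"
  shows "(h,v) \<in> J_op \<iota> A \<Longrightarrow> (h,v') \<in> J_op \<iota> A \<Longrightarrow> v = v'"
  unfolding J_op_def using iota_inj[OF HA opA lbA] by blast

lemma adjA_iff:
  assumes HA: "is_completion_A ip \<iota> A" and opA: "op_XXs A" and lbA: "pos_lower_bound A"
  shows "(y,k) \<in> adjKX ip (J_op \<iota> A) \<longleftrightarrow> (\<forall>u\<in>Range A. ip (\<iota> u) k = u y)"
proof
  assume "(y,k) \<in> adjKX ip (J_op \<iota> A)"
  thus "\<forall>u\<in>Range A. ip (\<iota> u) k = u y" unfolding adjKX_def J_op_def by blast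
next
  have H: "is_hilbert_ip ip" by (rule compl_hilbert[OF HA])
  assume a: "\<forall>u\<in>Range A. ip (\<iota> u) k = u y"
  show "(y,k) \<in> adjKX ip (J_op \<iota> A)"
  proof (rule adjKX_memI[where C="norm k"])
    show "\<And>h v v'. (h,v)\<in>J_op \<iota> A \<Longrightarrow> (h,v')\<in>J_op \<iota> A \<Longrightarrow> v = v'"
      by (rule J_op_sv[OF HA opA lbA])
    show "\<And>h v. (h,v)\<in>J_op \<iota> A \<Longrightarrow> ip h k = v y" using a unfolding J_op_def by blast
    show "\<And>a b. ip a k - ip b k = ip (a - b) k" by (simp add: hip_diff_left[OF H])
    show "norm k \<ge> 0" by simp
    show "\<And>h. cmod (ip h k) \<le> norm k * sqrt (Re (ip h h))"
      using hip_CS[OF H] by (simp add: hip_self[OF H] mult.commute)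
  qed
qed

lemma adjA_unique:
  assumes HA: "is_completion_A ip \<iota> A" and opA: "op_XXs A" and lbA: "pos_lower_bound A"
    and k: "(y,k) \<in> adjKX ip (J_op \<iota> A)" and k': "(y,k') \<in> adjKX ip (J_op \<iota> A)"
  shows "k = k'"
proof -
  have H: "is_hilbert_ip ip" by (rule compl_hilbert[OF HA])
  have "\<forall>u\<in>Range A. ip (\<iota> u) (k - k') = 0"
    using k k' unfolding adjA_iff[OF HA opA lbA] by (simp add: hip_diff_right[OF H])
  hence "\<iota> ` Range A \<subseteq> {h. ip h (k - k') = 0}" by blast
  moreover have "closed {h. ip h (k - k') = 0}"
    by (rule closed_Collect_eq[OF hip_cont_left[OF H] continuous_on_const])
  ultimately have "closure (\<iota> ` Range A) \<subseteq> {h. ip h (k - k') = 0}" by (rule closure_minimal)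
  hence "ip (k - k') (k - k') = 0" using compl_dense[OF HA] by auto
  thus ?thesis by (simp add: hip_self[OF H])
qed

lemma J_sum_sv:
  assumes HA: "is_completion_A ipA \<iota>A A" and opA: "op_XXs A" and lbA: "pos_lower_bound A"
    and HB: "is_completion_A ipB \<iota>B B" and opB: "op_XXs B" and lbB: "pos_lower_bound B"
  shows "(h,v) \<in> J_sum \<iota>A A \<iota>B B \<Longrightarrow> (h,v') \<in> J_sum \<iota>A A \<iota>B B \<Longrightarrow> v = v'"
  unfolding J_sum_def using iota_inj[OF HA opA lbA] iota_inj[OF HB opB lbB] by blast

lemma adjS_iff:
  assumes HA: "is_completion_A ipA \<iota>A A" and opA: "op_XXs A" and lbA: "pos_lower_bound A"
    and HB: "is_completion_A ipB \<iota>B B" and opB: "op_XXs B" and lbB: "pos_lower_bound B"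
  shows "(y,k) \<in> adjKX (ip_sum ipA ipB) (J_sum \<iota>A A \<iota>B B) \<longleftrightarrow>
         (y, fst k) \<in> adjKX ipA (J_op \<iota>A A) \<and> (y, snd k) \<in> adjKX ipB (J_op \<iota>B B)"
proof
  have HHA: "is_hilbert_ip ipA" by (rule compl_hilbert[OF HA])
  have HHB: "is_hilbert_ip ipB" by (rule compl_hilbert[OF HB])
  assume a: "(y,k) \<in> adjKX (ip_sum ipA ipB) (J_sum \<iota>A A \<iota>B B)"
  hence a': "\<And>h v. (h,v) \<in> J_sum \<iota>A A \<iota>B B \<Longrightarrow> ip_sum ipA ipB h k = v y"
    unfolding adjKX_def by blast
  have "\<forall>u\<in>Range A. ipA (\<iota>A u) (fst k) = u y"
  proof
    fix u assume u: "u \<in> Range A"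
    have "((\<iota>A u, \<iota>B (\<lambda>_. 0)), \<lambda>x. u x + (\<lambda>_. 0) x) \<in> J_sum \<iota>A A \<iota>B B"
      unfolding J_sum_def using u zero_Range[OF opB] by blast
    from a'[OF this] show "ipA (\<iota>A u) (fst k) = u y"
      by (simp add: ip_sum_def iota_zero[OF HB opB] hip_zero_left[OF HHB])
  qed
  moreover have "\<forall>w\<in>Range B. ipB (\<iota>B w) (snd k) = w y"
  proof
    fix w assume w: "w \<in> Range B"
    have "((\<iota>A (\<lambda>_. 0), \<iota>B w), \<lambda>x. (\<lambda>_. 0) x + w x) \<in> J_sum \<iota>A A \<iota>B B"
      unfolding J_sum_def using w zero_Range[OF opA] by blast
    from a'[OF this] show "ipB (\<iota>B w) (snd k) = w y"
      by (simp add: ip_sum_def iota_zero[OF HA opA] hip_zero_left[OF HHA])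
  qed
  ultimately show "(y, fst k) \<in> adjKX ipA (J_op \<iota>A A) \<and> (y, snd k) \<in> adjKX ipB (J_op \<iota>B B)"
    by (simp add: adjA_iff[OF HA opA lbA] adjA_iff[OF HB opB lbB])
next
  have HHA: "is_hilbert_ip ipA" by (rule compl_hilbert[OF HA])
  have HHB: "is_hilbert_ip ipB" by (rule compl_hilbert[OF HB])
  assume "(y, fst k) \<in> adjKX ipA (J_op \<iota>A A) \<and> (y, snd k) \<in> adjKX ipB (J_op \<iota>B B)"
  hence a: "\<forall>u\<in>Range A. ipA (\<iota>A u) (fst k) = u y" "\<forall>w\<in>Range B. ipB (\<iota>B w) (snd k) = w y"
    by (simp_all add: adjA_iff[OF HA opA lbA] adjA_iff[OF HB opB lbB])
  show "(y,k) \<in> adjKX (ip_sum ipA ipB) (J_sum \<iota>A A \<iota>B B)"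
  proof (rule adjKX_memI[where C="norm (fst k) + norm (snd k)"])
    show "\<And>h v v'. (h,v)\<in>J_sum \<iota>A A \<iota>B B \<Longrightarrow> (h,v')\<in>J_sum \<iota>A A \<iota>B B \<Longrightarrow> v = v'"
      by (rule J_sum_sv[OF HA opA lbA HB opB lbB])
    show "ip_sum ipA ipB h k = v y" if hv: "(h,v)\<in>J_sum \<iota>A A \<iota>B B" for h v
    proof -
      obtain u w where "h = (\<iota>A u, \<iota>B w)" "v = (\<lambda>x. u x + w x)" "u \<in> Range A" "w \<in> Range B"
        using hv unfolding J_sum_def by blast
      thus ?thesis using a by (simp add: ip_sum_def)
    qed
    show "\<And>a b. ip_sum ipA ipB a k - ip_sum ipA ipB b k = ip_sum ipA ipB (a - b) k"
      by (simp add: ip_sum_def hip_diff_left[OF HHA] hip_diff_left[OF HHB])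
    show "norm (fst k) + norm (snd k) \<ge> 0" by simp
    show "cmod (ip_sum ipA ipB h k) \<le> (norm (fst k) + norm (snd k)) * sqrt (Re (ip_sum ipA ipB h h))" for h
    proof -
      define s where "s = sqrt ((norm (fst h))\<^sup>2 + (norm (snd h))\<^sup>2)"
      have s1: "norm (fst h) \<le> s" unfolding s_def by simp
      have s2: "norm (snd h) \<le> s" unfolding s_def by (metis add.commute real_sqrt_sum_squares_ge1)
      have "cmod (ip_sum ipA ipB h k) \<le> cmod (ipA (fst h) (fst k)) + cmod (ipB (snd h) (snd k))"
        unfolding ip_sum_def by (rule norm_triangle_ineq)
      also have "\<dots> \<le> norm (fst h) * norm (fst k) + norm (snd h) * norm (snd k)"
        using hip_CS[OF HHA] hip_CS[OF HHB] by (meson add_mono)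
      also have "\<dots> \<le> s * norm (fst k) + s * norm (snd k)"
        using s1 s2 by (meson add_mono mult_right_mono norm_ge_zero)
      also have "\<dots> = (norm (fst k) + norm (snd k)) * sqrt (Re (ip_sum ipA ipB h h))"
        unfolding s_def ip_sum_def by (simp add: hip_self[OF HHA] hip_self[OF HHB] algebra_simps)
      finally show ?thesis .
    qed
  qed
qed

theorem theorem4:
  fixes A B :: "('x::{complex_normed_vec, banach} \<times> ('x \<Rightarrow> complex)) set"
    and ipA :: "'ha::{complex_normed_vec, banach} \<Rightarrow> 'ha \<Rightarrow> complex"
    and \<iota>A :: "('x \<Rightarrow> complex) \<Rightarrow> 'ha"
    and ipB :: "'hb::{complex_normed_vec, banach} \<Rightarrow> 'hb \<Rightarrow> complex"
    and \<iota>B :: "('x \<Rightarrow> complex) \<Rightarrow> 'hb"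
  assumes refl: "reflexive_sp TYPE('x)"
    and opA: "op_XXs A" and posA: "positive_op A" and saA: "self_adjoint_op A"
    and lbA: "pos_lower_bound A"
    and opB: "op_XXs B" and posB: "positive_op B" and saB: "self_adjoint_op B"
    and lbB: "pos_lower_bound B"
    and HA: "is_completion_A ipA \<iota>A A"
    and HB: "is_completion_A ipB \<iota>B B"
    and dense: "closure (Domain (adjKX ipA (J_op \<iota>A A)) \<inter> Domain (adjKX ipB (J_op \<iota>B B))) = UNIV"
  shows "adjKX (ip_sum ipA ipB) (J_sum \<iota>A A \<iota>B B)
           O adjXK (ip_sum ipA ipB) (adjKX (ip_sum ipA ipB) (J_sum \<iota>A A \<iota>B B))
         = form_sum ipA \<iota>A A ipB \<iota>B B
       \<and> op_sum A B \<subseteq> form_sum ipA \<iota>A A ipB \<iota>B B"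
proof -
  have HHA: "is_hilbert_ip ipA" by (rule compl_hilbert[OF HA])
  have HHB: "is_hilbert_ip ipB" by (rule compl_hilbert[OF HB])
  define JA where "JA = adjKX ipA (J_op \<iota>A A)"
  define JB where "JB = adjKX ipB (J_op \<iota>B B)"
  define JS where "JS = adjKX (ip_sum ipA ipB) (J_sum \<iota>A A \<iota>B B)"
  define D where "D = form_dom ipA \<iota>A A ipB \<iota>B B"
  have D: "D = Domain JA \<inter> Domain JB" unfolding D_def form_dom_def JA_def JB_def ..
  have S: "(y,k) \<in> JS \<longleftrightarrow> (y, fst k) \<in> JA \<and> (y, snd k) \<in> JB" for y k
    unfolding JS_def JA_def JB_def by (rule adjS_iff[OF HA opA lbA HB opB lbB])
  have uA: "k = k'" if "(y,k) \<in> JA" "(y,k') \<in> JA" for y k k'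
    using adjA_unique[OF HA opA lbA] that unfolding JA_def by blast
  have uB: "k = k'" if "(y,k) \<in> JB" "(y,k') \<in> JB" for y k k'
    using adjA_unique[OF HB opB lbB] that unfolding JB_def by blast
  have uS: "k = k'" if "(y,k) \<in> JS" "(y,k') \<in> JS" for y k k'
    using that S uA uB by (metis prod.expand)
  have avA: "aval JA y = k" if "(y,k) \<in> JA" for y k using uA that by (intro aval_eq) blast+
  have avB: "aval JB y = k" if "(y,k) \<in> JB" for y k using uB that by (intro aval_eq) blast+
  have avS: "aval JS y = k" if "(y,k) \<in> JS" for y k using uS that by (intro aval_eq) blast+
  have inS: "(y, (aval JA y, aval JB y)) \<in> JS" if yD: "y \<in> D" for y
  proof -
    obtain a b where "(y,a) \<in> JA" "(y,b) \<in> JB" using yD D by blast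
    thus ?thesis using S avA avB by simp
  qed
  have avS2: "aval JS y = (aval JA y, aval JB y)" if "y \<in> D" for y using avS inS that by blast
  have domS: "Domain JS = D" using S inS D by force
  have t: "form_t ipA \<iota>A A ipB \<iota>B B x y = ip_sum ipA ipB (aval JS x) (aval JS y)"
    if "x \<in> D" "y \<in> D" for x y
    unfolding form_t_def ip_sum_def using that avS2 JA_def JB_def by simp
  have symS: "ip_sum ipA ipB p q = cnj (ip_sum ipA ipB q p)" for p q
    unfolding ip_sum_def by (simp add: hip_sym[OF HHA, of "fst p"] hip_sym[OF HHB, of "snd p"])
  have FS: "form_sum ipA \<iota>A A ipB \<iota>B B = {(x, z). x \<in> D
        \<and> cont_on_d dist D (\<lambda>y. form_t ipA \<iota>A A ipB \<iota>B B x y) \<and> z \<in> cdual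
        \<and> (\<forall>y\<in>D. z y = form_t ipA \<iota>A A ipB \<iota>B B x y)}"
    unfolding form_sum_def D_def ..
  have part1: "JS O adjXK (ip_sum ipA ipB) JS = form_sum ipA \<iota>A A ipB \<iota>B B"
  proof (intro equalityI subsetI)
    fix p assume "p \<in> JS O adjXK (ip_sum ipA ipB) JS"
    then obtain x k z where p: "p = (x,z)" and xk: "(x,k) \<in> JS" and kz: "(k,z) \<in> adjXK (ip_sum ipA ipB) JS"
      by blast
    have x: "x \<in> D" using xk domS by blast
    have k: "aval JS x = k" using avS xk .
    have c: "cont_on_d dist D (\<lambda>y. ip_sum ipA ipB (aval JS y) k)" and z: "z \<in> cdual"
      and zy: "\<And>y k'. (y,k') \<in> JS \<Longrightarrow> z y = ip_sum ipA ipB k k'"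
      using kz domS unfolding adjXK_def by auto
    have "cont_on_d dist D (\<lambda>y. form_t ipA \<iota>A A ipB \<iota>B B x y)"
      by (rule cont_cong[OF _ cont_cnj[OF c]]) (simp add: t[OF x] k symS[of k])
    moreover have "\<forall>y\<in>D. z y = form_t ipA \<iota>A A ipB \<iota>B B x y"
      using zy inS avS2 t[OF x] k by simp
    ultimately show "p \<in> form_sum ipA \<iota>A A ipB \<iota>B B" unfolding FS p using x z by blast
  next
    fix p assume "p \<in> form_sum ipA \<iota>A A ipB \<iota>B B"
    then obtain x z where p: "p = (x,z)" and x: "x \<in> D"
      and c: "cont_on_d dist D (\<lambda>y. form_t ipA \<iota>A A ipB \<iota>B B x y)" and z: "z \<in> cdual"
      and zy: "\<forall>y\<in>D. z y = form_t ipA \<iota>A A ipB \<iota>B B x y"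
      unfolding FS by blast
    define k where "k = aval JS x"
    have xk: "(x,k) \<in> JS" unfolding k_def using inS[OF x] avS2[OF x] by simp
    have "cont_on_d dist D (\<lambda>y. ip_sum ipA ipB (aval JS y) k)"
      by (rule cont_cong[OF _ cont_cnj[OF c]]) (simp add: t[OF x] k_def symS[of _ "aval JS x"])
    hence "cont_on_d dist (Domain JS) (\<lambda>y. ip_sum ipA ipB (aval JS y) k)" using domS by simp
    moreover have "\<forall>(y,k')\<in>JS. z y = ip_sum ipA ipB k k'"
    proof (intro ballI, clarify)
      fix y k' assume yk: "(y,k') \<in> JS"
      hence y: "y \<in> D" using domS by blast
      show "z y = ip_sum ipA ipB k k'" using zy y t[OF x y] avS[OF yk] k_def by simp
    qed
    ultimately have "(k,z) \<in> adjXK (ip_sum ipA ipB) JS" unfolding adjXK_def using z by blast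
    thus "p \<in> JS O adjXK (ip_sum ipA ipB) JS" using xk p by blast
  qed
  have part2: "op_sum A B \<subseteq> form_sum ipA \<iota>A A ipB \<iota>B B"
  proof
    fix p assume "p \<in> op_sum A B"
    then obtain x u w where p: "p = (x, \<lambda>y. u y + w y)" and xu: "(x,u) \<in> A" and xw: "(x,w) \<in> B"
      unfolding op_sum_def by blast
    have uR: "u \<in> Range A" using xu by blast
    have wR: "w \<in> Range B" using xw by blast
    have xA: "(x, \<iota>A u) \<in> JA" unfolding JA_def adjA_iff[OF HA opA lbA]
      using compl_ip[OF HA _ xu] by blast
    have xB: "(x, \<iota>B w) \<in> JB" unfolding JB_def adjA_iff[OF HB opB lbB]
      using compl_ip[OF HB _ xw] by blast
    have x: "x \<in> D" using xA xB D by blast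
    have ft: "form_t ipA \<iota>A A ipB \<iota>B B x y = u y + w y" if y: "y \<in> D" for y
    proof -
      have yA: "(y, aval JA y) \<in> JA" using inS[OF y] S by simp
      have yB: "(y, aval JB y) \<in> JB" using inS[OF y] S by simp
      have "ipA (\<iota>A u) (aval JA y) = u y" using yA uR unfolding JA_def adjA_iff[OF HA opA lbA] by blast
      moreover have "ipB (\<iota>B w) (aval JB y) = w y" using yB wR unfolding JB_def adjA_iff[OF HB opB lbB] by blast
      ultimately show ?thesis unfolding form_t_def JA_def[symmetric] JB_def[symmetric]
        using avA[OF xA] avB[OF xB] by simp
    qed
    have uc: "u \<in> cdual" by (rule op_cdual[OF opA xu])
    have wc: "w \<in> cdual" by (rule op_cdual[OF opB xw])
    have zc: "(\<lambda>y. u y + w y) \<in> cdual"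
      using uc wc unfolding cdual_def by (auto simp: algebra_simps intro: continuous_on_add)
    have "continuous_on UNIV (\<lambda>y. u y + w y)" using zc unfolding cdual_def by blast
    hence "cont_on_d dist D (\<lambda>y. u y + w y)" by (rule cont_UNIV)
    hence "cont_on_d dist D (\<lambda>y. form_t ipA \<iota>A A ipB \<iota>B B x y)"
      by (rule cont_cong[rotated]) (simp add: ft)
    thus "p \<in> form_sum ipA \<iota>A A ipB \<iota>B B" unfolding FS p using x zc ft by auto
  qed
  show ?thesis using part1 part2 unfolding JS_def by simp
qed

end
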